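(* Let $k\ge3$ and let $\{H_{r_1},\dots,H_{r_k}\}$ be a set of pairwise ultra-parallel hyperplanes in $\mathbb{H}^n$ having a common perpendicular $\varrho$ (a geodesic line meeting each $H_{r_i}$ orthogonally). If the group $D\subseteq\mathrm{Iso}(\mathbb{H}^n)$ generated by the reflections $r_i$ across $H_{r_i}$ is a discrete subgroup, then $D$ is isomorphic to the infinite dihedral group $D_\infty$.
   Context: Two disjoint hyperplanes in $\mathbb{H}^n$ are ultra-parallel if they have no common point in the visual boundary $\partial\mathbb{H}^n$. *)

theory Defs
  imports "HOL-Analysis.Analysis" "HOL-Algebra.Algebra"
begin

text \<open>Hyperboloid model of hyperbolic n-space, n = CARD('n), inside
  Minkowski space R^(n+1) = (real^'n) \<times> real (last coordinate = time).\<close>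

type_synonym 'n mpt = "(real^'n) \<times> real"

definition minner :: "('n::finite) mpt \<Rightarrow> 'n mpt \<Rightarrow> real" where
  "minner x y = fst x \<bullet> fst y - snd x * snd y"

definition hyp_space :: "('n::finite) mpt set" where
  "hyp_space = {p. minner p p = -1 \<and> snd p > 0}"

definition spacelike :: "('n::finite) mpt \<Rightarrow> bool" where
  "spacelike v \<longleftrightarrow> minner v v > 0"

definition hyperplane_of :: "('n::finite) mpt \<Rightarrow> 'n mpt set" where
  "hyperplane_of v = {p \<in> hyp_space. minner p v = 0}"

text \<open>Points of the visual boundary are rays of future light-like vectors;
  the boundary of the hyperplane H_v consists of the rays orthogonal to v.
  (Both conditions are invariant under positive scaling, so we work with
  representatives.)\<close>
definition ideal_rep :: "('n::finite) mpt \<Rightarrow> bool" where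
  "ideal_rep w \<longleftrightarrow> w \<noteq> 0 \<and> minner w w = 0 \<and> snd w > 0"

definition hyperplane_boundary :: "('n::finite) mpt \<Rightarrow> 'n mpt set" where
  "hyperplane_boundary v = {w. ideal_rep w \<and> minner w v = 0}"

definition ultra_parallel :: "('n::finite) mpt \<Rightarrow> 'n mpt \<Rightarrow> bool" where
  "ultra_parallel u v \<longleftrightarrow>
     hyperplane_of u \<inter> hyperplane_of v = {} \<and>
     hyperplane_boundary u \<inter> hyperplane_boundary v = {}"

definition mrefl :: "('n::finite) mpt \<Rightarrow> 'n mpt \<Rightarrow> 'n mpt" where
  "mrefl v x = x - (2 * minner x v / minner v v) *\<^sub>R v"

definition geod :: "('n::finite) mpt \<Rightarrow> 'n mpt \<Rightarrow> real \<Rightarrow> 'n mpt" where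
  "geod p w t = cosh t *\<^sub>R p + sinh t *\<^sub>R w"

definition geod_vel :: "('n::finite) mpt \<Rightarrow> 'n mpt \<Rightarrow> real \<Rightarrow> 'n mpt" where
  "geod_vel p w t = sinh t *\<^sub>R p + cosh t *\<^sub>R w"

definition geod_data :: "('n::finite) mpt \<Rightarrow> 'n mpt \<Rightarrow> bool" where
  "geod_data p w \<longleftrightarrow> p \<in> hyp_space \<and> minner w w = 1 \<and> minner p w = 0"

text \<open>The geodesic line (p,w) meets H_v orthogonally: at an intersection point q
  the velocity is Minkowski-orthogonal to the tangent space of H_v at q.\<close>
definition meets_orthogonally :: "('n::finite) mpt \<Rightarrow> 'n mpt \<Rightarrow> 'n mpt \<Rightarrow> bool" where
  "meets_orthogonally p w v \<longleftrightarrow>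
     (\<exists>t. geod p w t \<in> hyperplane_of v \<and>
          (\<forall>x. minner x (geod p w t) = 0 \<and> minner x v = 0 \<longrightarrow>
               minner x (geod_vel p w t) = 0))"

text \<open>Discreteness of a group of linear maps of Minkowski space (the
  topology on O(n,1), which induces that of Iso(H^n)).\<close>
definition discrete_maps :: "(('n::finite) mpt \<Rightarrow> 'n mpt) set \<Rightarrow> bool" where
  "discrete_maps D \<longleftrightarrow>
     (\<forall>g\<in>D. \<exists>e>0. \<forall>h\<in>D. h \<noteq> g \<longrightarrow> e \<le> onorm (\<lambda>x. h x - g x))"

definition gen_group :: "(('n::finite) mpt \<Rightarrow> 'n mpt) set \<Rightarrow> ('n mpt \<Rightarrow> 'n mpt) monoid" where
  "gen_group S = (BijGroup UNIV) \<lparr>carrier := generate (BijGroup UNIV) S\<rparr>"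

text \<open>The infinite dihedral group, realised as the isometry group of Z:
  maps x \<mapsto> x + b and x \<mapsto> b - x.\<close>
definition Dinf :: "(int \<Rightarrow> int) monoid" where
  "Dinf = \<lparr>carrier = {f. \<exists>b. f = (\<lambda>x. x + b) \<or> f = (\<lambda>x. b - x)},
           mult = (\<circ>), one = id\<rparr>"

end

theory Submission
  imports Defs
begin

lemma minner_sym: "minner x y = minner y x"
  by (simp add: minner_def inner_commute mult.commute)
lemma minner_add_left[simp]: "minner (x + y) z = minner x z + minner y z"
  by (simp add: minner_def inner_add_left algebra_simps)
lemma minner_add_right[simp]: "minner z (x + y) = minner z x + minner z y"
  by (simp add: minner_def inner_add_right algebra_simps)
lemma minner_diff_left[simp]: "minner (x - y) z = minner x z - minner y z"
  by (simp add: minner_def inner_diff_left algebra_simps)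
lemma minner_diff_right[simp]: "minner z (x - y) = minner z x - minner z y"
  by (simp add: minner_def inner_diff_right algebra_simps)
lemma minner_scaleR_left[simp]: "minner (a *\<^sub>R x) z = a * minner x z"
  by (simp add: minner_def algebra_simps)
lemma minner_scaleR_right[simp]: "minner z (a *\<^sub>R x) = a * minner z x"
  by (simp add: minner_def algebra_simps)
lemma minner_zero[simp]: "minner 0 z = 0" "minner z 0 = 0"
  by (simp_all add: minner_def)

definition Phi :: "('n::finite) mpt \<Rightarrow> 'n mpt \<Rightarrow> real \<Rightarrow> real \<Rightarrow> 'n mpt \<Rightarrow> 'n mpt" where
  "Phi p w e b x = x + ((- minner x p) * (cosh b - 1) + e * minner x w * sinh b) *\<^sub>R p
      + ((- minner x p) * sinh b + minner x w * (e * cosh b - 1)) *\<^sub>R w"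

lemma minner_bound: "\<bar>minner x y\<bar> \<le> 2 * norm x * norm y"
proof -
  have nf: "norm (fst z) \<le> norm z" for z :: "'c::real_normed_vector \<times> 'd::real_normed_vector"
    using norm_fst_le[of "fst z" "snd z"] by simp
  have ns: "norm (snd z) \<le> norm z" for z :: "'c::real_normed_vector \<times> 'd::real_normed_vector"
    using norm_snd_le[of "snd z" "fst z"] by simp
  have "\<bar>fst x \<bullet> fst y\<bar> \<le> norm (fst x) * norm (fst y)" by (rule Cauchy_Schwarz_ineq2)
  also have "\<dots> \<le> norm x * norm y" by (intro mult_mono nf) auto
  finally have 1: "\<bar>fst x \<bullet> fst y\<bar> \<le> norm x * norm y" .
  have "\<bar>snd x * snd y\<bar> = norm (snd x) * norm (snd y)" by (simp add: abs_mult)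
  also have "\<dots> \<le> norm x * norm y" by (intro mult_mono ns) auto
  finally have 2: "\<bar>snd x * snd y\<bar> \<le> norm x * norm y" .
  show ?thesis using 1 2 by (simp add: minner_def)
qed


lemma coeff_eq: "A1 + A2 = A \<Longrightarrow> B1 + B2 = B \<Longrightarrow>
   x + A1 *\<^sub>R p + B1 *\<^sub>R w + A2 *\<^sub>R p + B2 *\<^sub>R w = x + A *\<^sub>R p + B *\<^sub>R (w::'a::real_vector)"
  by (auto simp: algebra_simps)

locale frame =
  fixes p w :: "('n::finite) mpt"
  assumes pp: "minner p p = -1" and ww: "minner w w = 1" and pw: "minner p w = 0"
begin

lemma wp: "minner w p = 0" using pw minner_sym by metis

lemma Phi_p: "minner (Phi p w e b x) p = minner x p * cosh b - e * minner x w * sinh b"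
  by (simp add: Phi_def pp wp algebra_simps)
lemma Phi_w: "minner (Phi p w e b x) w = - (minner x p * sinh b) + e * minner x w * cosh b"
  by (simp add: Phi_def pw ww algebra_simps)

lemma Phi_comp:
  assumes "e \<in> {1,-1}" "e' \<in> {1,-1}"
  shows "Phi p w e b (Phi p w e' b' x) = Phi p w (e*e') (b + e*b') x"
proof -
  define a where "a = minner x p"
  define c where "c = minner x w"
  have "Phi p w e b (Phi p w e' b' x) = Phi p w e' b' x
      + ((- minner (Phi p w e' b' x) p) * (cosh b - 1) + e * minner (Phi p w e' b' x) w * sinh b) *\<^sub>R p
      + ((- minner (Phi p w e' b' x) p) * sinh b + minner (Phi p w e' b' x) w * (e * cosh b - 1)) *\<^sub>R w"
    by (simp add: Phi_def)
  also have "\<dots> = x + ((- a) * (cosh b' - 1) + e' * c * sinh b') *\<^sub>R p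
      + ((- a) * sinh b' + c * (e' * cosh b' - 1)) *\<^sub>R w
      + ((- (a * cosh b' - e' * c * sinh b')) * (cosh b - 1) + e * (- (a * sinh b') + e' * c * cosh b') * sinh b) *\<^sub>R p
      + ((- (a * cosh b' - e' * c * sinh b')) * sinh b + (- (a * sinh b') + e' * c * cosh b') * (e * cosh b - 1)) *\<^sub>R w"
    by (simp add: Phi_p Phi_w a_def c_def) (simp add: Phi_def a_def c_def)
  also have "\<dots> = x + ((- a) * (cosh (b + e*b') - 1) + (e*e') * c * sinh (b + e*b')) *\<^sub>R p
      + ((- a) * sinh (b + e*b') + c * ((e*e') * cosh (b + e*b') - 1)) *\<^sub>R w"
    apply (rule coeff_eq)
    using assms by (auto simp: cosh_add sinh_add algebra_simps)
  also have "\<dots> = Phi p w (e*e') (b + e*b') x" by (simp add: Phi_def a_def c_def)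
  finally show ?thesis .
qed

lemma Phi_id: "Phi p w 1 0 = id"
  by (rule ext) (simp add: Phi_def)

lemma Phi_bij: assumes "e \<in> {1,-1}" shows "bij (Phi p w e b)"
proof -
  have ee: "e * e = 1" using assms by auto
  have "Phi p w e b \<circ> Phi p w e (-e*b) = id" "Phi p w e (-e*b) \<circ> Phi p w e b = id"
    using Phi_comp[OF assms assms] by (auto simp: ee Phi_id[symmetric] algebra_simps)
  then show ?thesis using o_bij by blast
qed

lemma Phi_inj: assumes "e \<in> {1,-1}" "e' \<in> {1,-1}" "Phi p w e b = Phi p w e' b'"
  shows "e = e' \<and> b = b'"
proof -
  have "minner (Phi p w e b p) w = minner (Phi p w e' b' p) w" using assms by simp
  hence bb: "b = b'" by (simp add: Phi_w pp pw)
  have "minner (Phi p w e b w) w = minner (Phi p w e' b' w) w" using assms by simp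
  hence "e * cosh b = e' * cosh b" by (simp add: Phi_w wp ww bb)
  hence "e = e'" using cosh_real_pos[of b] by simp
  with bb show ?thesis by simp
qed

lemma mrefl_geod_vel: "mrefl (geod_vel p w s) = Phi p w (- 1) (2 * s)"
proof
  fix x
  define u where "u = geod_vel p w s"
  have cs: "cosh s * cosh s = 1 + sinh s * sinh s" using cosh_square_eq[of s] by (simp add: power2_eq_square)
  have cs2: "cosh s * (cosh s * z) = z + sinh s * (sinh s * z)" for z
    by (metis cs mult.assoc distrib_right mult_1)
  have uu: "minner u u = 1" using cs
    by (simp add: u_def geod_vel_def pp ww pw wp algebra_simps cosh_square_eq power2_eq_square)
  define k where "k = 2 * minner x u"
  have k: "k = 2 * (sinh s * minner x p + cosh s * minner x w)"
    by (simp add: k_def u_def geod_vel_def)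
  have "mrefl u x = x - k *\<^sub>R u"
    by (simp add: mrefl_def uu k_def)
  also have "\<dots> = x - k *\<^sub>R (sinh s *\<^sub>R p + cosh s *\<^sub>R w)"
    by (simp add: u_def geod_vel_def)
  also have "\<dots> = x + (- k * sinh s) *\<^sub>R p + (- k * cosh s) *\<^sub>R w"
    by (simp add: algebra_simps)
  also have "\<dots> = Phi p w (- 1) (2 * s) x"
  proof -
    have A: "- k * sinh s = (- minner x p) * (cosh (2 * s) - 1) + (- 1) * minner x w * sinh (2 * s)"
      unfolding k sinh_double cosh_double using cs by (simp add: algebra_simps power2_eq_square)
    have B: "- k * cosh s = (- minner x p) * sinh (2 * s) + minner x w * ((- 1) * cosh (2 * s) - 1)"
      unfolding k sinh_double cosh_double using cs by (simp add: algebra_simps power2_eq_square cs2)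
    show ?thesis by (simp only: Phi_def A B)
  qed
  finally show "mrefl (geod_vel p w s) x = Phi p w (- 1) (2 * s) x" by (simp add: u_def)
qed

lemma geod_qq: "minner (geod p w s) (geod p w s) = -1"
proof -
  have cs: "cosh s * cosh s = 1 + sinh s * sinh s" using cosh_square_eq[of s] by (simp add: power2_eq_square)
  then show ?thesis by (simp add: geod_def pp ww pw wp algebra_simps)
qed
lemma geod_uu: "minner (geod_vel p w s) (geod_vel p w s) = 1"
proof -
  have cs: "cosh s * cosh s = 1 + sinh s * sinh s" using cosh_square_eq[of s] by (simp add: power2_eq_square)
  then show ?thesis by (simp add: geod_vel_def pp ww pw wp algebra_simps)
qed
lemma geod_qu: "minner (geod p w s) (geod_vel p w s) = 0"
  by (simp add: geod_def geod_vel_def pp ww pw wp algebra_simps)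

lemma Phi_Bij: "e \<in> {1,-1} \<Longrightarrow> Phi p w e b \<in> carrier (BijGroup UNIV)"
  using Phi_bij[of e b] by (simp add: BijGroup_def Bij_def)
lemma BG_mult: "f \<in> carrier (BijGroup UNIV) \<Longrightarrow> g \<in> carrier (BijGroup UNIV) \<Longrightarrow> f \<otimes>\<^bsub>BijGroup UNIV\<^esub> g = f \<circ> g"
  by (simp add: BijGroup_def compose_def fun_eq_iff)
lemma BG_one: "\<one>\<^bsub>BijGroup UNIV\<^esub> = id"
  by (simp add: BijGroup_def fun_eq_iff)
lemma Phi_mult: "e \<in> {1,-1} \<Longrightarrow> e' \<in> {1,-1} \<Longrightarrow>
   Phi p w e b \<otimes>\<^bsub>BijGroup UNIV\<^esub> Phi p w e' b' = Phi p w (e*e') (b + e*b')"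
  by (simp add: BG_mult Phi_Bij fun_eq_iff Phi_comp)
lemma Phi_inv: assumes "e \<in> {1,-1}" shows "inv\<^bsub>BijGroup UNIV\<^esub> (Phi p w e b) = Phi p w e (-e*b)"
proof (rule group.inv_equality[OF group_BijGroup])
  have ee: "e * e = 1" using assms by auto
  show "Phi p w e (- e * b) \<otimes>\<^bsub>BijGroup UNIV\<^esub> Phi p w e b = \<one>\<^bsub>BijGroup UNIV\<^esub>"
    using assms by (simp add: Phi_mult ee BG_one Phi_id[symmetric])
  show "Phi p w e b \<in> carrier (BijGroup UNIV)" "Phi p w e (- e * b) \<in> carrier (BijGroup UNIV)"
    using assms by (auto intro: Phi_Bij)
qed

lemma Phi_near_id:
  "norm (Phi p w 1 b x - x) \<le> (\<bar>cosh b - 1\<bar> + \<bar>sinh b\<bar>) * (2 * (norm p + norm w)^2) * norm x"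
proof -
  define a where "a = minner x p"
  define c where "c = minner x w"
  define g where "g = \<bar>cosh b - 1\<bar> + \<bar>sinh b\<bar>"
  define A where "A = (- a) * (cosh b - 1) + c * sinh b"
  define B where "B = (- a) * sinh b + c * (cosh b - 1)"
  have eq: "Phi p w 1 b x - x = A *\<^sub>R p + B *\<^sub>R w"
    by (simp add: Phi_def A_def B_def a_def c_def)
  have g0: "g \<ge> 0" by (simp add: g_def)
  have A: "\<bar>A\<bar> \<le> (\<bar>a\<bar> + \<bar>c\<bar>) * g"
  proof -
    have "\<bar>A\<bar> \<le> \<bar>a\<bar> * \<bar>cosh b - 1\<bar> + \<bar>c\<bar> * \<bar>sinh b\<bar>"
      unfolding A_def by (metis abs_minus_cancel abs_mult abs_triangle_ineq)
    also have "\<dots> \<le> (\<bar>a\<bar> + \<bar>c\<bar>) * g"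
      by (simp add: g_def algebra_simps add_mono mult_left_mono)
    finally show ?thesis .
  qed
  have B: "\<bar>B\<bar> \<le> (\<bar>a\<bar> + \<bar>c\<bar>) * g"
  proof -
    have "\<bar>B\<bar> \<le> \<bar>a\<bar> * \<bar>sinh b\<bar> + \<bar>c\<bar> * \<bar>cosh b - 1\<bar>"
      unfolding B_def by (metis abs_minus_cancel abs_mult abs_triangle_ineq)
    also have "\<dots> \<le> (\<bar>a\<bar> + \<bar>c\<bar>) * g"
      by (simp add: g_def algebra_simps add_mono mult_left_mono)
    finally show ?thesis .
  qed
  have ac: "\<bar>a\<bar> + \<bar>c\<bar> \<le> 2 * norm x * (norm p + norm w)"
    using minner_bound[of x p] minner_bound[of x w] by (simp add: a_def c_def algebra_simps)
  have "norm (Phi p w 1 b x - x) \<le> \<bar>A\<bar> * norm p + \<bar>B\<bar> * norm w"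
    unfolding eq by (metis norm_scaleR norm_triangle_ineq real_norm_def)
  also have "\<dots> \<le> ((\<bar>a\<bar> + \<bar>c\<bar>) * g) * norm p + ((\<bar>a\<bar> + \<bar>c\<bar>) * g) * norm w"
    by (intro add_mono mult_right_mono A B) auto
  also have "\<dots> = ((\<bar>a\<bar> + \<bar>c\<bar>) * (norm p + norm w)) * g" by (simp add: algebra_simps)
  also have "\<dots> \<le> ((2 * norm x * (norm p + norm w)) * (norm p + norm w)) * g"
    by (intro mult_right_mono ac g0) auto
  finally show ?thesis by (simp add: g_def power2_eq_square algebra_simps)
qed

lemma onorm_Phi_near_id:
  "onorm (\<lambda>x. Phi p w 1 b x - x) \<le> (\<bar>cosh b - 1\<bar> + \<bar>sinh b\<bar>) * (2 * (norm p + norm w)^2)"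
  by (rule onorm_le) (rule Phi_near_id)

lemma small_Phi:
  assumes "\<epsilon> > 0"
  shows "\<exists>\<delta>>0. \<forall>b. \<bar>b\<bar> < \<delta> \<longrightarrow> onorm (\<lambda>x. Phi p w 1 b x - x) < \<epsilon>"
proof -
  define f where "f = (\<lambda>b::real. (\<bar>cosh b - 1\<bar> + \<bar>sinh b\<bar>) * (2 * (norm p + norm w)^2))"
  have "continuous (at 0) f" unfolding f_def by (intro continuous_intros)
  then obtain \<delta> where d: "\<delta> > 0" "\<forall>b. dist b 0 < \<delta> \<longrightarrow> dist (f b) (f 0) < \<epsilon>"
    using assms unfolding continuous_at_eps_delta by blast
  have "\<forall>b. \<bar>b\<bar> < \<delta> \<longrightarrow> onorm (\<lambda>x. Phi p w 1 b x - x) < \<epsilon>"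
  proof (intro allI impI)
    fix b :: real assume "\<bar>b\<bar> < \<delta>"
    then have "dist (f b) (f 0) < \<epsilon>" using d by (simp add: dist_real_def)
    then have "f b < \<epsilon>" by (simp add: f_def dist_real_def)
    then show "onorm (\<lambda>x. Phi p w 1 b x - x) < \<epsilon>"
      using onorm_Phi_near_id[of b] unfolding f_def by linarith
  qed
  with d show ?thesis by blast
qed

end

lemma discrete_subgroup_real:
  fixes L :: "real set"
  assumes L0: "0 \<in> L" and Ldiff: "\<And>x y. x \<in> L \<Longrightarrow> y \<in> L \<Longrightarrow> x - y \<in> L"
    and aL: "a \<in> L" "a \<noteq> 0" and d: "\<delta> > 0" and disc: "\<And>x. x \<in> L \<Longrightarrow> x \<noteq> 0 \<Longrightarrow> \<delta> \<le> \<bar>x\<bar>"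
  shows "\<exists>c>0. L = range (\<lambda>n::int. of_int n * c)"
proof -
  have Lneg: "x \<in> L \<Longrightarrow> - x \<in> L" for x using Ldiff[OF L0, of x] by simp
  have Ladd: "x \<in> L \<Longrightarrow> y \<in> L \<Longrightarrow> x + y \<in> L" for x y using Ldiff[of x "- y"] Lneg[of y] by simp
  define P where "P = {x \<in> L. x > 0}"
  have Pne: "P \<noteq> {}"
    using aL Lneg[of a] unfolding P_def by (cases "a > 0") auto
  have Pbdd: "bdd_below P" unfolding bdd_below_def P_def by (rule exI[of _ 0]) auto
  have Pge: "x \<in> P \<Longrightarrow> \<delta> \<le> x" for x using disc[of x] unfolding P_def by auto
  define c where "c = Inf P"
  have Plow: "x \<in> P \<Longrightarrow> c \<le> x" for x unfolding c_def using cInf_lower[OF _ Pbdd] by auto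
  have cd: "\<delta> \<le> c" unfolding c_def using Pne Pge by (intro cInf_greatest) auto
  have cP: "c \<in> P"
  proof (rule ccontr)
    assume nc: "c \<notin> P"
    obtain x where x: "x \<in> P" "x < c + \<delta>"
      using cInf_lessD[OF Pne, of "c + \<delta>"] d unfolding c_def by auto
    have "c \<le> x" using Plow x(1) by auto
    with nc x(1) have cx: "c < x" by (cases "c = x") auto
    obtain y where y: "y \<in> P" "y < x"
      using cInf_lessD[OF Pne, of x] cx unfolding c_def by auto
    have "c \<le> y" using Plow y(1) by auto
    have "x - y \<in> L" using x(1) y(1) Ldiff unfolding P_def by auto
    moreover have "x - y > 0" "x - y < \<delta>" using y \<open>c \<le> y\<close> x by auto
    ultimately show False using disc[of "x - y"] by auto
  qed
  have c0: "c > 0" using cP unfolding P_def by auto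
  have cL: "c \<in> L" using cP unfolding P_def by auto
  have natL: "real m * c \<in> L" for m :: nat
    by (induction m) (auto simp: L0 distrib_right intro: Ladd cL)
  have intL: "of_int n * c \<in> L" for n :: int
  proof (cases "n \<ge> 0")
    case True then show ?thesis using natL[of "nat n"] by simp
  next
    case False then show ?thesis using Lneg[OF natL[of "nat (- n)"]] by simp
  qed
  have "L \<subseteq> range (\<lambda>n::int. of_int n * c)"
  proof
    fix x assume xL: "x \<in> L"
    define n where "n = \<lfloor>x / c\<rfloor>"
    define r where "r = x - of_int n * c"
    have rL: "r \<in> L" unfolding r_def using Ldiff[OF xL intL] by simp
    have "of_int n \<le> x / c" "x / c < of_int n + 1" unfolding n_def by linarith+
    then have r0: "0 \<le> r" "r < c" using c0 unfolding r_def by (auto simp: field_simps)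
    have "r = 0"
    proof (rule ccontr)
      assume "r \<noteq> 0"
      then have "r \<in> P" using r0 rL unfolding P_def by auto
      then have "c \<le> r" by (rule Plow)
      with r0 show False by simp
    qed
    then show "x \<in> range (\<lambda>n::int. of_int n * c)" unfolding r_def by auto
  qed
  then have "L = range (\<lambda>n::int. of_int n * c)" using intL by auto
  with c0 show ?thesis by blast
qed

lemma mrefl_scale: "c \<noteq> 0 \<Longrightarrow> mrefl (c *\<^sub>R u) = mrefl u"
  by (rule ext) (simp add: mrefl_def)


lemma Dinf_cases: "f \<in> carrier Dinf \<Longrightarrow> (\<And>b. f = (\<lambda>x. x + b) \<Longrightarrow> P) \<Longrightarrow> (\<And>b. f = (\<lambda>x. b - x) \<Longrightarrow> P) \<Longrightarrow> P"
  by (auto simp: Dinf_def)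

lemma Dinf_t[simp]: "(\<lambda>x. x + b) \<in> carrier Dinf" by (auto simp: Dinf_def)
lemma Dinf_r[simp]: "(\<lambda>x. b - x) \<in> carrier Dinf" by (auto simp: Dinf_def)
lemma Dinf_mult[simp]: "f \<otimes>\<^bsub>Dinf\<^esub> g = f \<circ> g" by (simp add: Dinf_def)
lemma Dinf_one[simp]: "\<one>\<^bsub>Dinf\<^esub> = id" by (simp add: Dinf_def)

lemma comp_tt: "(\<lambda>x::int. x + b) \<circ> (\<lambda>x. x + b') = (\<lambda>x. x + (b + b'))" by (auto simp: fun_eq_iff)
lemma comp_tr: "(\<lambda>x::int. x + b) \<circ> (\<lambda>x. b' - x) = (\<lambda>x. (b + b') - x)" by (auto simp: fun_eq_iff)
lemma comp_rt: "(\<lambda>x::int. b - x) \<circ> (\<lambda>x. x + b') = (\<lambda>x. (b - b') - x)" by (auto simp: fun_eq_iff)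
lemma comp_rr: "(\<lambda>x::int. b - x) \<circ> (\<lambda>x. b' - x) = (\<lambda>x. x + (b - b'))" by (auto simp: fun_eq_iff)

lemma group_Dinf: "group Dinf"
proof (rule groupI)
  fix x y assume "x \<in> carrier Dinf" "y \<in> carrier Dinf"
  then show "x \<otimes>\<^bsub>Dinf\<^esub> y \<in> carrier Dinf"
    by (elim Dinf_cases) (simp_all add: comp_tt comp_tr comp_rt comp_rr)
next
  show "\<one>\<^bsub>Dinf\<^esub> \<in> carrier Dinf" using Dinf_t[of 0] by (simp add: id_def)
next
  fix x y z assume "x \<in> carrier Dinf" "y \<in> carrier Dinf" "z \<in> carrier Dinf"
  then show "x \<otimes>\<^bsub>Dinf\<^esub> y \<otimes>\<^bsub>Dinf\<^esub> z = x \<otimes>\<^bsub>Dinf\<^esub> (y \<otimes>\<^bsub>Dinf\<^esub> z)"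
    by (simp add: comp_assoc)
next
  fix x assume "x \<in> carrier Dinf"
  then show "\<one>\<^bsub>Dinf\<^esub> \<otimes>\<^bsub>Dinf\<^esub> x = x" by simp
next
  fix x assume "x \<in> carrier Dinf"
  then show "\<exists>y\<in>carrier Dinf. y \<otimes>\<^bsub>Dinf\<^esub> x = \<one>\<^bsub>Dinf\<^esub>"
  proof (elim Dinf_cases)
    fix b assume "x = (\<lambda>x. x + b)"
    then show ?thesis using Dinf_t[of "- b"] by (intro bexI[of _ "\<lambda>x. x + (- b)"]) (auto simp: fun_eq_iff)
  next
    fix b assume "x = (\<lambda>x. b - x)"
    then show ?thesis by (intro bexI[of _ "\<lambda>x. b - x"]) (auto simp: fun_eq_iff)
  qed
qed

lemma isotropic_zero:
  assumes "minner q q = -1" "minner y q = 0" "minner y y = 0"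
  shows "y = (0::('n::finite) mpt)"
proof -
  obtain Y r where y: "y = (Y, r)" by (cases y)
  obtain Q s where q: "q = (Q, s)" by (cases q)
  have 1: "Q \<bullet> Q = s * s - 1" "Y \<bullet> Q = r * s" "Y \<bullet> Y = r * r"
    using assms by (auto simp: minner_def y q)
  have "(Y \<bullet> Q)^2 \<le> (Y \<bullet> Y) * (Q \<bullet> Q)" by (rule Cauchy_Schwarz_ineq)
  then have "(r * s) * (r * s) \<le> (r * r) * (s * s - 1)" using 1 by (simp add: power2_eq_square)
  then have "r * r \<le> 0" by (simp add: algebra_simps)
  then have r0: "r = 0" by (metis mult_eq_0_iff not_square_less_zero order_antisym_conv zero_le_square)
  then have "Y \<bullet> Y = 0" using 1 by simp
  then have "Y = 0" by simp
  with r0 show ?thesis by (simp add: y zero_prod_def)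
qed

lemma normal_parallel:
  assumes qq: "minner q q = -1" and uu: "minner u u = 1" and qu: "minner q u = 0"
    and qv: "minner q v = 0" and v0: "v \<noteq> 0"
    and orth: "\<forall>x. minner x q = 0 \<and> minner x v = 0 \<longrightarrow> minner x u = 0"
  shows "\<exists>c. c \<noteq> 0 \<and> v = c *\<^sub>R (u::('n::finite) mpt)"
proof -
  define a where "a = minner v u"
  define v' where "v' = v - a *\<^sub>R u"
  have vq: "minner v q = 0" "minner u q = 0" using qv qu minner_sym by metis+
  have v'q: "minner v' q = 0" using vq by (simp add: v'_def)
  have v'u: "minner v' u = 0" using uu by (simp add: v'_def a_def)
  have vu: "minner u v' = 0" using v'u minner_sym by metis
  have v'v: "minner v' v = minner v' v'"
  proof -
    have "minner v' v' = minner v' v - a * minner v' u" by (simp add: v'_def)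
    then show ?thesis using v'u by simp
  qed
  have "minner v' v' = 0"
  proof (rule ccontr)
    assume nz: "minner v' v' \<noteq> 0"
    define x where "x = u - (minner u v / minner v' v') *\<^sub>R v'"
    have "minner x q = 0" using vq v'q by (simp add: x_def)
    moreover have "minner x v = 0" using nz by (simp add: x_def v'v)
    ultimately have "minner x u = 0" using orth by blast
    moreover have "minner x u = 1" using uu v'u by (simp add: x_def)
    ultimately show False by simp
  qed
  then have "v' = 0" using isotropic_zero[OF qq v'q] by simp
  then have v: "v = a *\<^sub>R u" by (simp add: v'_def)
  then have "a \<noteq> 0" using v0 by auto
  with v show ?thesis by blast
qed


theorem mainTheorem8:
  fixes k :: nat and v :: "nat \<Rightarrow> ('n::finite) mpt"
  assumes "k \<ge> 3"
    and "\<forall>i<k. spacelike (v i)"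
    and "\<forall>i<k. \<forall>j<k. i \<noteq> j \<longrightarrow> ultra_parallel (v i) (v j)"
    and "\<exists>p w. geod_data p w \<and> (\<forall>i<k. meets_orthogonally p w (v i))"
    and "discrete_maps (carrier (gen_group ((\<lambda>i. mrefl (v i)) ` {..<k})))"
  shows "gen_group ((\<lambda>i. mrefl (v i)) ` {..<k}) \<cong> Dinf"
proof -
  obtain p w where pw: "geod_data p w" and mo: "\<forall>i<k. meets_orthogonally p w (v i)"
    using assms(4) by blast
  interpret frame p w using pw by unfold_locales (auto simp: geod_data_def hyp_space_def)
  have "\<forall>i. \<exists>s. i < k \<longrightarrow> geod p w s \<in> hyperplane_of (v i) \<and>
     (\<forall>x. minner x (geod p w s) = 0 \<and> minner x (v i) = 0 \<longrightarrow> minner x (geod_vel p w s) = 0)"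
    using mo unfolding meets_orthogonally_def by blast
  then obtain t where t: "\<And>i. i < k \<Longrightarrow> geod p w (t i) \<in> hyperplane_of (v i) \<and>
     (\<forall>x. minner x (geod p w (t i)) = 0 \<and> minner x (v i) = 0 \<longrightarrow> minner x (geod_vel p w (t i)) = 0)"
    by metis
  have refl: "mrefl (v i) = Phi p w (- 1) (2 * t i)" if ik: "i < k" for i
  proof -
    have v0: "v i \<noteq> 0" using assms(2) ik by (auto simp: spacelike_def)
    have qv: "minner (geod p w (t i)) (v i) = 0" using t[OF ik] by (simp add: hyperplane_of_def)
    obtain c where c: "c \<noteq> 0" "v i = c *\<^sub>R geod_vel p w (t i)"
      using normal_parallel[OF geod_qq geod_uu geod_qu qv v0] t[OF ik] by blast
    then show ?thesis by (simp add: mrefl_scale mrefl_geod_vel)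
  qed
  have tinj: "t i \<noteq> t j" if "i < k" "j < k" "i \<noteq> j" for i j
  proof
    assume "t i = t j"
    then have "geod p w (t i) \<in> hyperplane_of (v i) \<inter> hyperplane_of (v j)"
      using t[OF that(1)] t[OF that(2)] by simp
    then show False using assms(3) that by (auto simp: ultra_parallel_def)
  qed
  define S where "S = (\<lambda>i. mrefl (v i)) ` {..<k}"
  have S: "S = (\<lambda>i. Phi p w (- 1) (2 * t i)) ` {..<k}" unfolding S_def using refl by auto
  define G where "G = BijGroup (UNIV :: 'n mpt set)"
  define H where "H = generate G S"
  have carrD: "carrier (gen_group S) = H" by (simp add: gen_group_def H_def G_def)
  have SG: "S \<subseteq> carrier G" unfolding S G_def using Phi_Bij by auto
  have subH: "subgroup H G" unfolding H_def G_def
    using group.generate_is_subgroup[OF group_BijGroup] SG G_def by blast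
  have genPhi: "\<exists>e b. e \<in> {1,-1} \<and> h = Phi p w e b" if "h \<in> H" for h
    using that unfolding H_def
  proof (induction rule: generate.induct)
    case one
    then show ?case using Phi_id by (intro exI[of _ 1] exI[of _ 0]) (simp add: G_def BG_one)
  next
    case (incl h)
    then show ?case unfolding S by auto
  next
    case (inv h)
    then obtain i where "h = Phi p w (- 1) (2 * t i)" unfolding S by auto
    then show ?case unfolding G_def by (auto simp: Phi_inv)
  next
    case (eng h1 h2)
    then show ?case unfolding G_def by (auto simp: Phi_mult; blast)
  qed
  have PhiH: "Phi p w e b \<otimes>\<^bsub>G\<^esub> Phi p w e' b' \<in> H" if "Phi p w e b \<in> H" "Phi p w e' b' \<in> H" for e e' b b'
    using subgroup.m_closed[OF subH that] .
  define L where "L = {b. Phi p w 1 b \<in> H}"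
  have L0: "0 \<in> L" unfolding L_def using subgroup.one_closed[OF subH] by (simp add: G_def BG_one Phi_id)
  have Ldiff: "x - y \<in> L" if "x \<in> L" "y \<in> L" for x y
  proof -
    have "inv\<^bsub>G\<^esub> (Phi p w 1 y) \<in> H" using subgroup.m_inv_closed[OF subH] that by (auto simp: L_def)
    then have "Phi p w 1 (- y) \<in> H" by (simp add: G_def Phi_inv)
    then have "Phi p w 1 x \<otimes>\<^bsub>G\<^esub> Phi p w 1 (- y) \<in> H" using PhiH that by (auto simp: L_def)
    then show ?thesis by (simp add: G_def Phi_mult L_def)
  qed
  have k01: "0 < k" "1 < k" using assms(1) by auto
  have SH: "Phi p w (- 1) (2 * t i) \<in> H" if "i < k" for i
    unfolding H_def using generate.incl[of _ S G] S that by auto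
  have aL: "2 * t 0 - 2 * t 1 \<in> L"
    using PhiH[OF SH[OF k01(1)] SH[OF k01(2)]] by (simp add: G_def Phi_mult L_def)
  have a0: "2 * t 0 - 2 * t 1 \<noteq> 0" using tinj[OF k01] by simp
  have oneH: "id \<in> H" using subgroup.one_closed[OF subH] by (simp add: G_def BG_one)
  obtain \<epsilon> where eps: "\<epsilon> > 0" "\<forall>h\<in>H. h \<noteq> id \<longrightarrow> \<epsilon> \<le> onorm (\<lambda>x. h x - id x)"
    using assms(5) oneH unfolding S_def[symmetric] carrD discrete_maps_def by blast
  obtain \<delta> where del: "\<delta> > 0" "\<forall>b. \<bar>b\<bar> < \<delta> \<longrightarrow> onorm (\<lambda>x. Phi p w 1 b x - x) < \<epsilon>"
    using small_Phi[OF eps(1)] by blast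
  have disc: "\<delta> \<le> \<bar>b\<bar>" if "b \<in> L" "b \<noteq> 0" for b
  proof (rule ccontr)
    assume "\<not> \<delta> \<le> \<bar>b\<bar>"
    then have "onorm (\<lambda>x. Phi p w 1 b x - x) < \<epsilon>" using del by auto
    moreover have "Phi p w 1 b \<noteq> id" using Phi_inj[of 1 1 b 0] Phi_id that by auto
    ultimately show False using eps that by (force simp: L_def)
  qed
  obtain c where c: "c > 0" "L = range (\<lambda>n::int. of_int n * c)"
    using discrete_subgroup_real[OF L0 Ldiff aL a0 del(1) disc] by blast
  have Lmem: "Phi p w 1 b \<in> H \<longleftrightarrow> (\<exists>n::int. b = of_int n * c)" for b
    using c(2) unfolding L_def by (auto simp: set_eq_iff)
  have Mmem: "Phi p w (- 1) b \<in> H \<longleftrightarrow> (\<exists>n::int. b = 2 * t 0 + of_int n * c)" for b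
  proof
    assume "Phi p w (- 1) b \<in> H"
    then have "Phi p w (- 1) b \<otimes>\<^bsub>G\<^esub> Phi p w (- 1) (2 * t 0) \<in> H" using PhiH SH[OF k01(1)] by blast
    then have "Phi p w 1 (b - 2 * t 0) \<in> H" by (simp add: G_def Phi_mult)
    then obtain n :: int where "b - 2 * t 0 = of_int n * c" using Lmem by blast
    then show "\<exists>n::int. b = 2 * t 0 + of_int n * c" by (intro exI[of _ n]) simp
  next
    assume "\<exists>n::int. b = 2 * t 0 + of_int n * c"
    then obtain n :: int where n: "b = 2 * t 0 + of_int n * c" by blast
    have "Phi p w 1 (of_int n * c) \<in> H" using Lmem by blast
    then have "Phi p w 1 (of_int n * c) \<otimes>\<^bsub>G\<^esub> Phi p w (- 1) (2 * t 0) \<in> H" using PhiH SH[OF k01(1)] by blast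
    then show "Phi p w (- 1) b \<in> H" by (simp add: G_def Phi_mult n add.commute)
  qed
  define \<theta> where "\<theta> f = Phi p w (of_int (f 1 - f 0)) ((1 - of_int (f 1 - f 0)) * t 0 + of_int (f 0) * c)"
    for f :: "int \<Rightarrow> int"
  have \<theta>t: "\<theta> (\<lambda>x. x + b) = Phi p w 1 (of_int b * c)" for b by (simp add: \<theta>_def)
  have \<theta>r: "\<theta> (\<lambda>x. b - x) = Phi p w (- 1) (2 * t 0 + of_int b * c)" for b by (simp add: \<theta>_def)
  have \<theta>H: "\<theta> f \<in> H" if "f \<in> carrier Dinf" for f
    using that by (elim Dinf_cases) (auto simp: \<theta>t \<theta>r Lmem Mmem)
  have multD: "x \<otimes>\<^bsub>gen_group S\<^esub> y = x \<otimes>\<^bsub>G\<^esub> y" for x y by (simp add: gen_group_def G_def)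
  have hom: "\<theta> \<in> hom Dinf (gen_group S)"
    unfolding hom_def
  proof (safe)
    fix f assume "f \<in> carrier Dinf"
    then show "\<theta> f \<in> carrier (gen_group S)" using \<theta>H carrD by simp
  next
    fix f g assume "f \<in> carrier Dinf" "g \<in> carrier Dinf"
    then show "\<theta> (f \<otimes>\<^bsub>Dinf\<^esub> g) = \<theta> f \<otimes>\<^bsub>gen_group S\<^esub> \<theta> g"
      by (elim Dinf_cases; simp only: Dinf_mult comp_tt comp_tr comp_rt comp_rr \<theta>t \<theta>r multD G_def;
          simp add: Phi_mult algebra_simps)
  qed
  have inj: "inj_on \<theta> (carrier Dinf)"
  proof (rule inj_onI)
    fix f g assume f: "f \<in> carrier Dinf" and g: "g \<in> carrier Dinf" and eq: "\<theta> f = \<theta> g"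
    have one: "(1::real) \<in> {1,-1}" and mone: "(-1::real) \<in> {1,-1}" by auto
    show "f = g"
    proof (rule Dinf_cases[OF f]; rule Dinf_cases[OF g])
      fix b b' assume fb: "f = (\<lambda>x. x + b)" and gb: "g = (\<lambda>x. x + b')"
      then have "Phi p w 1 (of_int b * c) = Phi p w 1 (of_int b' * c)" using eq by (simp add: \<theta>t)
      then have "of_int b * c = of_int b' * c" using Phi_inj[OF one one] by blast
      then have "b = b'" using c(1) by simp
      then show "f = g" using fb gb by simp
    next
      fix b b' assume fb: "f = (\<lambda>x. x + b)" and gb: "g = (\<lambda>x. b' - x)"
      then have "Phi p w 1 (of_int b * c) = Phi p w (- 1) (2 * t 0 + of_int b' * c)" using eq by (simp add: \<theta>t \<theta>r)
      then show "f = g" using Phi_inj[OF one mone] by auto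
    next
      fix b b' assume fb: "f = (\<lambda>x. b - x)" and gb: "g = (\<lambda>x. x + b')"
      then have "Phi p w (- 1) (2 * t 0 + of_int b * c) = Phi p w 1 (of_int b' * c)" using eq by (simp add: \<theta>t \<theta>r)
      then show "f = g" using Phi_inj[OF mone one] by auto
    next
      fix b b' assume fb: "f = (\<lambda>x. b - x)" and gb: "g = (\<lambda>x. b' - x)"
      then have "Phi p w (- 1) (2 * t 0 + of_int b * c) = Phi p w (- 1) (2 * t 0 + of_int b' * c)" using eq by (simp add: \<theta>r)
      then have "2 * t 0 + of_int b * c = 2 * t 0 + of_int b' * c" using Phi_inj[OF mone mone] by blast
      then have "b = b'" using c(1) by simp
      then show "f = g" using fb gb by simp
    qed
  qed
  have surj: "H \<subseteq> \<theta> ` carrier Dinf"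
  proof
    fix h assume hH: "h \<in> H"
    then obtain e b where eb: "e \<in> {1,-1}" "h = Phi p w e b" using genPhi by blast
    show "h \<in> \<theta> ` carrier Dinf"
    proof (cases "e = 1")
      case True
      then obtain n :: int where "b = of_int n * c" using hH eb Lmem by blast
      then have "h = \<theta> (\<lambda>x. x + n)" using True eb by (simp add: \<theta>t)
      then show ?thesis by (metis Dinf_t image_eqI)
    next
      case False
      then have "e = -1" using eb by auto
      then obtain n :: int where "b = 2 * t 0 + of_int n * c" using hH eb Mmem by blast
      then have "h = \<theta> (\<lambda>x. n - x)" using \<open>e = -1\<close> eb by (simp add: \<theta>r)
      then show ?thesis by (metis Dinf_r image_eqI)
    qed
  qed
  have "bij_betw \<theta> (carrier Dinf) (carrier (gen_group S))"
    unfolding bij_betw_def carrD using inj surj \<theta>H by auto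
  then have "\<theta> \<in> iso Dinf (gen_group S)" using hom by (simp add: iso_def)
  then have "Dinf \<cong> gen_group S" by (rule is_isoI)
  then show ?thesis using group.iso_sym[OF group_Dinf] unfolding S_def by blast
qed

end
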